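(* Let $P:\mathcal V\to\{\mathtt{true},\mathtt{false}\}$ and $PA:\mathcal A\to\{\mathtt{true},\mathtt{false}\}$ be labelings, $c$ a command, and $\rho_1,\rho_2,\mu_1,\mu_2$ scalar and array states. Assume: (1) $\mathtt b\notin\mathrm{UsedVars}(c)$ and $\rho_1(\mathtt b)=\rho_2(\mathtt b)=0$; (2) $|a|_{\mu_1}>0$ and $|a|_{\mu_2}>0$ for every array $a$; (3) $P;PA\vdash_{\mathtt{true}} c$ (IFC well-typed), $\rho_1\sim_P\rho_2$ and $\mu_1\sim_{PA}\mu_2$; (4) $\langle c,\rho_1,\mu_1\rangle\approx\langle c,\rho_2,\mu_2\rangle$. Then $\langle \mathrm{FiSLH}_P(c),\rho_1,\mu_1,\mathtt{false}\rangle\approx_s\langle \mathrm{FiSLH}_P(c),\rho_2,\mu_2,\mathtt{false}\rangle$.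
   Context: Language AWhile: scalar variables $X\in\mathcal V$, array names $a\in\mathcal A$. Arithmetic expressions $e::=n\ (n\in\mathbb N)\mid X\mid \mathrm{op}_{\mathbb N}(e,\dots,e)\mid be\,?\,e_1:e_2$; boolean expressions $be::=\mathtt{true}\mid\mathtt{false}\mid\mathrm{cmp}(e,e)\mid\mathrm{op}_{\mathbb B}(be,\dots,be)$; commands $c::=\mathtt{skip}\mid X:=e\mid c_1;c_2\mid \mathtt{if}\ be\ \mathtt{then}\ c_1\ \mathtt{else}\ c_2\mid\mathtt{while}\ be\ \mathtt{do}\ c\mid X\leftarrow a[e]\mid a[e]\leftarrow e'$. A scalar state is $\rho:\mathcal V\to\mathbb N$; an array state $\mu$ gives each array $a$ a size $|a|_\mu$ and values $\mu(a)[i]$ for $0\le i<|a|_\mu$. $[\![e]\!]_\rho,[\![be]\!]_\rho$ denote the usual pure evaluation (the conditional expression produces no observation). $\rho[X\mapsto v]$, $\mu[a[i]\mapsto v]$ are updates. $\mathrm{UsedVars}(c)$ is the set of scalar variables occurring in $c$. A distinguished scalar variable $\mathtt b$ is reserved as misspeculation flag. Sequential semantics: steps $\langle c,\rho,\mu\rangle\xrightarrow{o}\langle c',\rho',\mu'\rangle$, $o$ an observation $\mathrm{branch}(v)$, $\mathrm{read}(a,i)$, $\mathrm{write}(a,i)$, or none. Rules: $X:=e\to\mathtt{skip}$ with $\rho[X\mapsto[\![e]\!]_\rho]$, no obs; if $c_1\xrightarrow{o}c_1'$ then $c_1;c_2\xrightarrow{o}c_1';c_2$; $\mathtt{skip};c\to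 c$, no obs; $\mathtt{if}\ be\ \mathtt{then}\ c_{\mathtt{true}}\ \mathtt{else}\ c_{\mathtt{false}}\to c_{v}$ with $v=[\![be]\!]_\rho$, obs $\mathrm{branch}(v)$; $\mathtt{while}\ be\ \mathtt{do}\ c\to\mathtt{if}\ be\ \mathtt{then}\ (c;\mathtt{while}\ be\ \mathtt{do}\ c)\ \mathtt{else}\ \mathtt{skip}$, no obs; $X\leftarrow a[ie]\to\mathtt{skip}$ with $\rho[X\mapsto\mu(a)[i]]$, obs $\mathrm{read}(a,i)$, where $i=[\![ie]\!]_\rho<|a|_\mu$; $a[ie]\leftarrow e\to\mathtt{skip}$ with $\mu[a[i]\mapsto[\![e]\!]_\rho]$, obs $\mathrm{write}(a,i)$, where $i=[\![ie]\!]_\rho<|a|_\mu$. $\xrightarrow{O}{}^*$ is the reflexive-transitive closure, $O$ the list of produced observations. Speculative semantics: configurations $\langle c,\rho,\mu,\beta\rangle$ with boolean misspeculation flag $\beta$; steps $\xrightarrow[d]{o}$ with optional directive $d\in\{\mathit{step},\mathit{force},\mathrm{load}(a',j),\mathrm{store}(a',j)\}$. Assignment, sequence, skip and while rules are as sequentially, keep $\beta$ and use no directive. Conditional: with $\mathit{step}$ go to $c_v$, $v=[\![be]\!]_\rho$, flag unchanged, obs $\mathrm{branch}(v)$; with $\mathit{force}$ go to $c_{\neg v}$, flag set to $\mathtt{true}$, obs $\mathrm{branch}(v)$. Read/write with $\mathit{step}$: as sequentially (requires $i<|a|_\mu$), flag unchanged. Read with $\mathrm{load}(a',j)$: only if $\beta=\mathtt{true}$,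 $i=[\![ie]\!]_\rho\ge|a|_\mu$, $j<|a'|_\mu$; sets $X$ to $\mu(a')[j]$, obs $\mathrm{read}(a,i)$. Write with $\mathrm{store}(a',j)$: only if $\beta=\mathtt{true}$, $i\ge|a|_\mu$, $j<|a'|_\mu$; sets $\mu[a'[j]\mapsto[\![e]\!]_\rho]$, obs $\mathrm{write}(a,i)$. Multi-step $\xrightarrow[D]{O}{}^*$ with $D$ the list of directives. Observational equivalences: $\langle c_1,\rho_1,\mu_1\rangle\approx\langle c_2,\rho_2,\mu_2\rangle$ iff for all $O_1,O_2$ such that $\langle c_k,\rho_k,\mu_k\rangle\xrightarrow{O_k}{}^*$ some configuration ($k=1,2$), one of $O_1,O_2$ is a prefix of the other. $\langle c_1,\rho_1,\mu_1,\beta_1\rangle\approx_s\langle c_2,\rho_2,\mu_2,\beta_2\rangle$ iff for all $D,O_1,O_2$, if $\langle c_k,\rho_k,\mu_k,\beta_k\rangle\xrightarrow[D]{O_k}{}^*$ some configuration ($k=1,2$) then $O_1=O_2$. Labels: booleans, $\mathtt{true}$=public, $\mathtt{false}$=secret; $\ell_1\sqsubseteq\ell_2$ iff $\ell_2=\mathtt{true}\Rightarrow\ell_1=\mathtt{true}$; $\ell_1\sqcup\ell_2=\ell_1\wedge\ell_2$. For $P:\mathcal V\to$ labels, $P(e)$ and $P(be)$ are public iff every scalar variable occurring in the expression is public. $\rho_1\sim_P\rho_2$ iff $\rho_1(X)=\rho_2(X)$ whenever $P(X)=\mathtt{true}$; $\mu_1\sim_{PA}\mu_2$ iff for all $a$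 with $PA(a)=\mathtt{true}$, $|a|_{\mu_1}=|a|_{\mu_2}$ and contents agree. IFC typing $P;PA\vdash_{pc}c$: $\mathtt{skip}$ always; $X:=e$ if $pc\sqcup P(e)\sqsubseteq P(X)$; $c_1;c_2$ if both typed under $pc$; $\mathtt{if}\ be\ \mathtt{then}\ c_1\ \mathtt{else}\ c_2$ if $c_1,c_2$ typed under $pc\sqcup P(be)$; $\mathtt{while}\ be\ \mathtt{do}\ c$ if $c$ typed under $pc\sqcup P(be)$; $X\leftarrow a[i]$ if $pc\sqcup P(i)\sqcup PA(a)\sqsubseteq P(X)$; $a[i]\leftarrow e$ if $pc\sqcup P(i)\sqcup P(e)\sqsubseteq PA(a)$. Index-SLH recipe with parameters $B(be)$, $R(X,i)$, $W(i,e)$: $[\![\mathtt{skip}]\!]=\mathtt{skip}$; $[\![X:=e]\!]=X:=e$; $[\![c_1;c_2]\!]=[\![c_1]\!];[\![c_2]\!]$; $[\![\mathtt{if}\ be\ \mathtt{then}\ c_1\ \mathtt{else}\ c_2]\!]=\mathtt{if}\ B(be)\ \mathtt{then}\ (\mathtt b:=B(be)\,?\,\mathtt b:1;[\![c_1]\!])\ \mathtt{else}\ (\mathtt b:=B(be)\,?\,1:\mathtt b;[\![c_2]\!])$; $[\![\mathtt{while}\ be\ \mathtt{do}\ c]\!]=(\mathtt{while}\ B(be)\ \mathtt{do}\ (\mathtt b:=B(be)\,?\,\mathtt b:1;[\![c]\!]));\ \mathtt b:=B(be)\,?\,1:\mathtt b$; $[\![X\leftarrow a[i]]\!]=X\leftarrow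 a[R(X,i)]$; $[\![a[i]\leftarrow e]\!]=a[W(i,e)]\leftarrow e$. Write $m(i)=(\mathtt b==1)\,?\,0:i$. $\mathrm{FiSLH}_P$ is the instance with $B(be)=(\mathtt b==0\ \&\&\ be)$ if $P(be)=\mathtt{false}$ and $be$ otherwise; $R(X,i)=m(i)$ if $P(X)=\mathtt{true}$ or $P(i)=\mathtt{false}$, else $i$; $W(i,e)=m(i)$ if $P(e)=\mathtt{false}$ or $P(i)=\mathtt{false}$, else $i$. *)

theory Defs
  imports Main "HOL-Library.Sublist"
begin

type_synonym vname = string
type_synonym aname = string

datatype aexp =
    ANum nat
  | AVar vname
  | AOp "nat list \<Rightarrow> nat" "aexp list"
  | ACond bexp aexp aexp
and bexp =
    BTrue
  | BFalse
  | BCmp "nat \<Rightarrow> nat \<Rightarrow> bool" aexp aexp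
  | BOp "bool list \<Rightarrow> bool" "bexp list"

datatype com =
    Skip
  | Asgn vname aexp
  | Seq com com
  | If bexp com com
  | While bexp com
  | ARead vname aname aexp
  | AWrite aname aexp aexp        (* a[e] <- e' *)

text \<open>Distinguished misspeculation flag variable.\<close>
definition bvar :: vname where "bvar = ''b''"

type_synonym sstate = "vname \<Rightarrow> nat"
type_synonym astate = "aname \<Rightarrow> nat list"

primrec aeval :: "aexp \<Rightarrow> sstate \<Rightarrow> nat" and beval :: "bexp \<Rightarrow> sstate \<Rightarrow> bool" where
  "aeval (ANum n) s = n"
| "aeval (AVar x) s = s x"
| "aeval (AOp f es) s = f (map (\<lambda>e. aeval e s) es)"
| "aeval (ACond b e1 e2) s = (if beval b s then aeval e1 s else aeval e2 s)"
| "beval BTrue s = True"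
| "beval BFalse s = False"
| "beval (BCmp f e1 e2) s = f (aeval e1 s) (aeval e2 s)"
| "beval (BOp f bs) s = f (map (\<lambda>b. beval b s) bs)"

primrec avars :: "aexp \<Rightarrow> vname set" and bvars :: "bexp \<Rightarrow> vname set" where
  "avars (ANum n) = {}"
| "avars (AVar x) = {x}"
| "avars (AOp f es) = \<Union> (set (map avars es))"
| "avars (ACond b e1 e2) = bvars b \<union> avars e1 \<union> avars e2"
| "bvars BTrue = {}"
| "bvars BFalse = {}"
| "bvars (BCmp f e1 e2) = avars e1 \<union> avars e2"
| "bvars (BOp f bs) = \<Union> (set (map bvars bs))"

fun used_vars :: "com \<Rightarrow> vname set" where
  "used_vars Skip = {}"
| "used_vars (Asgn x e) = {x} \<union> avars e"
| "used_vars (Seq c1 c2) = used_vars c1 \<union> used_vars c2"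
| "used_vars (If b c1 c2) = bvars b \<union> used_vars c1 \<union> used_vars c2"
| "used_vars (While b c) = bvars b \<union> used_vars c"
| "used_vars (ARead x a i) = {x} \<union> avars i"
| "used_vars (AWrite a i e) = avars i \<union> avars e"

datatype obs = OBranch bool | ORead aname nat | OWrite aname nat

datatype dir = DStep | DForce | DLoad aname nat | DStore aname nat

inductive seq_step :: "com \<Rightarrow> sstate \<Rightarrow> astate \<Rightarrow> obs list \<Rightarrow> com \<Rightarrow> sstate \<Rightarrow> astate \<Rightarrow> bool" where
  Asgn: "seq_step (Asgn x e) s m [] Skip (s(x := aeval e s)) m"
| Seq: "seq_step c1 s m os c1' s' m' \<Longrightarrow> seq_step (Seq c1 c2) s m os (Seq c1' c2) s' m'"
| SeqSkip: "seq_step (Seq Skip c) s m [] c s m"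
| If: "seq_step (If b c1 c2) s m [OBranch (beval b s)] (if beval b s then c1 else c2) s m"
| While: "seq_step (While b c) s m [] (If b (Seq c (While b c)) Skip) s m"
| Read: "aeval ie s < length (m a) \<Longrightarrow>
    seq_step (ARead x a ie) s m [ORead a (aeval ie s)] Skip (s(x := m a ! aeval ie s)) m"
| Write: "aeval ie s < length (m a) \<Longrightarrow>
    seq_step (AWrite a ie e) s m [OWrite a (aeval ie s)] Skip s (m(a := (m a)[aeval ie s := aeval e s]))"

inductive seq_steps :: "com \<Rightarrow> sstate \<Rightarrow> astate \<Rightarrow> obs list \<Rightarrow> com \<Rightarrow> sstate \<Rightarrow> astate \<Rightarrow> bool" where
  refl: "seq_steps c s m [] c s m"
| step: "seq_step c s m os1 c' s' m' \<Longrightarrow> seq_steps c' s' m' os2 c'' s'' m'' \<Longrightarrow>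
    seq_steps c s m (os1 @ os2) c'' s'' m''"

inductive spec_step :: "com \<Rightarrow> sstate \<Rightarrow> astate \<Rightarrow> bool \<Rightarrow> dir list \<Rightarrow> obs list \<Rightarrow>
    com \<Rightarrow> sstate \<Rightarrow> astate \<Rightarrow> bool \<Rightarrow> bool" where
  Asgn: "spec_step (Asgn x e) s m f [] [] Skip (s(x := aeval e s)) m f"
| Seq: "spec_step c1 s m f ds os c1' s' m' f' \<Longrightarrow>
    spec_step (Seq c1 c2) s m f ds os (Seq c1' c2) s' m' f'"
| SeqSkip: "spec_step (Seq Skip c) s m f [] [] c s m f"
| IfStep: "spec_step (If b c1 c2) s m f [DStep] [OBranch (beval b s)]
    (if beval b s then c1 else c2) s m f"
| IfForce: "spec_step (If b c1 c2) s m f [DForce] [OBranch (beval b s)]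
    (if beval b s then c2 else c1) s m True"
| While: "spec_step (While b c) s m f [] [] (If b (Seq c (While b c)) Skip) s m f"
| Read: "aeval ie s < length (m a) \<Longrightarrow>
    spec_step (ARead x a ie) s m f [DStep] [ORead a (aeval ie s)] Skip (s(x := m a ! aeval ie s)) m f"
| ReadLoad: "f \<Longrightarrow> aeval ie s \<ge> length (m a) \<Longrightarrow> j < length (m a') \<Longrightarrow>
    spec_step (ARead x a ie) s m f [DLoad a' j] [ORead a (aeval ie s)] Skip (s(x := m a' ! j)) m f"
| Write: "aeval ie s < length (m a) \<Longrightarrow>
    spec_step (AWrite a ie e) s m f [DStep] [OWrite a (aeval ie s)] Skip s
      (m(a := (m a)[aeval ie s := aeval e s])) f"
| WriteStore: "f \<Longrightarrow> aeval ie s \<ge> length (m a) \<Longrightarrow> j < length (m a') \<Longrightarrow>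
    spec_step (AWrite a ie e) s m f [DStore a' j] [OWrite a (aeval ie s)] Skip s
      (m(a' := (m a')[j := aeval e s])) f"

inductive spec_steps :: "com \<Rightarrow> sstate \<Rightarrow> astate \<Rightarrow> bool \<Rightarrow> dir list \<Rightarrow> obs list \<Rightarrow>
    com \<Rightarrow> sstate \<Rightarrow> astate \<Rightarrow> bool \<Rightarrow> bool" where
  refl: "spec_steps c s m f [] [] c s m f"
| step: "spec_step c s m f ds1 os1 c' s' m' f' \<Longrightarrow> spec_steps c' s' m' f' ds2 os2 c'' s'' m'' f'' \<Longrightarrow>
    spec_steps c s m f (ds1 @ ds2) (os1 @ os2) c'' s'' m'' f''"

definition seq_obs_eqv :: "com \<Rightarrow> sstate \<Rightarrow> astate \<Rightarrow> com \<Rightarrow> sstate \<Rightarrow> astate \<Rightarrow> bool" where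
  "seq_obs_eqv c1 s1 m1 c2 s2 m2 \<longleftrightarrow>
    (\<forall>os1 os2 c1' s1' m1' c2' s2' m2'.
       seq_steps c1 s1 m1 os1 c1' s1' m1' \<longrightarrow> seq_steps c2 s2 m2 os2 c2' s2' m2' \<longrightarrow>
       prefix os1 os2 \<or> prefix os2 os1)"

definition spec_obs_eqv :: "com \<Rightarrow> sstate \<Rightarrow> astate \<Rightarrow> bool \<Rightarrow> com \<Rightarrow> sstate \<Rightarrow> astate \<Rightarrow> bool \<Rightarrow> bool" where
  "spec_obs_eqv c1 s1 m1 f1 c2 s2 m2 f2 \<longleftrightarrow>
    (\<forall>ds os1 os2 c1' s1' m1' f1' c2' s2' m2' f2'.
       spec_steps c1 s1 m1 f1 ds os1 c1' s1' m1' f1' \<longrightarrow> spec_steps c2 s2 m2 f2 ds os2 c2' s2' m2' f2' \<longrightarrow>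
       os1 = os2)"

section \<open>Labels and IFC typing (True = public, False = secret)\<close>

type_synonym label = bool

definition lle :: "label \<Rightarrow> label \<Rightarrow> bool" where "lle l1 l2 \<longleftrightarrow> (l2 \<longrightarrow> l1)"
definition ljoin :: "label \<Rightarrow> label \<Rightarrow> label" where "ljoin l1 l2 = (l1 \<and> l2)"

definition alabel :: "(vname \<Rightarrow> label) \<Rightarrow> aexp \<Rightarrow> label" where
  "alabel P e \<longleftrightarrow> (\<forall>x\<in>avars e. P x)"
definition blabel :: "(vname \<Rightarrow> label) \<Rightarrow> bexp \<Rightarrow> label" where
  "blabel P b \<longleftrightarrow> (\<forall>x\<in>bvars b. P x)"

definition pub_equiv :: "(vname \<Rightarrow> label) \<Rightarrow> sstate \<Rightarrow> sstate \<Rightarrow> bool" where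
  "pub_equiv P s1 s2 \<longleftrightarrow> (\<forall>x. P x \<longrightarrow> s1 x = s2 x)"
definition apub_equiv :: "(aname \<Rightarrow> label) \<Rightarrow> astate \<Rightarrow> astate \<Rightarrow> bool" where
  "apub_equiv PA m1 m2 \<longleftrightarrow> (\<forall>a. PA a \<longrightarrow> length (m1 a) = length (m2 a) \<and> m1 a = m2 a)"

inductive well_typed :: "(vname \<Rightarrow> label) \<Rightarrow> (aname \<Rightarrow> label) \<Rightarrow> label \<Rightarrow> com \<Rightarrow> bool" where
  WT_Skip: "well_typed P PA pc Skip"
| WT_Asgn: "lle (ljoin pc (alabel P e)) (P x) \<Longrightarrow> well_typed P PA pc (Asgn x e)"
| WT_Seq: "well_typed P PA pc c1 \<Longrightarrow> well_typed P PA pc c2 \<Longrightarrow> well_typed P PA pc (Seq c1 c2)"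
| WT_If: "well_typed P PA (ljoin pc (blabel P b)) c1 \<Longrightarrow> well_typed P PA (ljoin pc (blabel P b)) c2 \<Longrightarrow>
    well_typed P PA pc (If b c1 c2)"
| WT_While: "well_typed P PA (ljoin pc (blabel P b)) c \<Longrightarrow> well_typed P PA pc (While b c)"
| WT_Read: "lle (ljoin (ljoin pc (alabel P i)) (PA a)) (P x) \<Longrightarrow> well_typed P PA pc (ARead x a i)"
| WT_Write: "lle (ljoin (ljoin pc (alabel P i)) (alabel P e)) (PA a) \<Longrightarrow> well_typed P PA pc (AWrite a i e)"

definition bAnd :: "bexp \<Rightarrow> bexp \<Rightarrow> bexp" where
  "bAnd b1 b2 = BOp (\<lambda>l. l ! 0 \<and> l ! 1) [b1, b2]"

definition bEq :: "aexp \<Rightarrow> aexp \<Rightarrow> bexp" where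
  "bEq e1 e2 = BCmp (=) e1 e2"

definition mask :: "aexp \<Rightarrow> aexp" where
  "mask i = ACond (bEq (AVar bvar) (ANum 1)) (ANum 0) i"

definition fiB :: "(vname \<Rightarrow> label) \<Rightarrow> bexp \<Rightarrow> bexp" where
  "fiB P be = (if \<not> blabel P be then bAnd (bEq (AVar bvar) (ANum 0)) be else be)"

definition fiR :: "(vname \<Rightarrow> label) \<Rightarrow> vname \<Rightarrow> aexp \<Rightarrow> aexp" where
  "fiR P x i = (if P x \<or> \<not> alabel P i then mask i else i)"

definition fiW :: "(vname \<Rightarrow> label) \<Rightarrow> aexp \<Rightarrow> aexp \<Rightarrow> aexp" where
  "fiW P i e = (if \<not> alabel P e \<or> \<not> alabel P i then mask i else i)"

fun fislh :: "(vname \<Rightarrow> label) \<Rightarrow> com \<Rightarrow> com" where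
  "fislh P Skip = Skip"
| "fislh P (Asgn x e) = Asgn x e"
| "fislh P (Seq c1 c2) = Seq (fislh P c1) (fislh P c2)"
| "fislh P (If be c1 c2) =
    If (fiB P be)
      (Seq (Asgn bvar (ACond (fiB P be) (AVar bvar) (ANum 1))) (fislh P c1))
      (Seq (Asgn bvar (ACond (fiB P be) (ANum 1) (AVar bvar))) (fislh P c2))"
| "fislh P (While be c) =
    Seq (While (fiB P be) (Seq (Asgn bvar (ACond (fiB P be) (AVar bvar) (ANum 1))) (fislh P c)))
        (Asgn bvar (ACond (fiB P be) (ANum 1) (AVar bvar)))"
| "fislh P (ARead x a i) = ARead x a (fiR P x i)"
| "fislh P (AWrite a i e) = AWrite a (fiW P i e) e"

end

theory Submission
  imports Defs
begin


lemma eval_pub: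
  "(\<forall>x\<in>avars e. P x) \<Longrightarrow> pub_equiv P s1 s2 \<Longrightarrow> aeval e s1 = aeval e s2"
  "(\<forall>x\<in>bvars b. P x) \<Longrightarrow> pub_equiv P s1 s2 \<Longrightarrow> beval b s1 = beval b s2"
proof (induction e and b)
  case (AOp f es) then show ?case by (auto intro!: arg_cong[where f=f])
next
  case (BOp f bs) then show ?case by (auto intro!: arg_cong[where f=f])
qed (auto simp: pub_equiv_def)

lemma aeval_pubE: "alabel P e \<Longrightarrow> pub_equiv P s1 s2 \<Longrightarrow> aeval e s1 = aeval e s2"
  using eval_pub(1) alabel_def by metis
lemma beval_pubE: "blabel P b \<Longrightarrow> pub_equiv P s1 s2 \<Longrightarrow> beval b s1 = beval b s2"
  using eval_pub(2) blabel_def by metis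

lemma fiB_b0: "s bvar = 0 \<Longrightarrow> beval (fiB P be) s = beval be s"
  by (simp add: fiB_def bAnd_def bEq_def)

lemma fiB_b1: "s1 bvar = 1 \<Longrightarrow> s2 bvar = 1 \<Longrightarrow> pub_equiv P s1 s2 \<Longrightarrow>
   beval (fiB P be) s1 = beval (fiB P be) s2"
  using beval_pubE[of P be s1 s2] by (auto simp: fiB_def bAnd_def bEq_def)

lemma mask_eval: "aeval (mask i) s = (if s bvar = 1 then 0 else aeval i s)"
  by (simp add: mask_def bEq_def)

lemma fiR_b0: "s bvar = 0 \<Longrightarrow> aeval (fiR P x i) s = aeval i s"
  by (simp add: fiR_def mask_eval)
lemma fiW_b0: "s bvar = 0 \<Longrightarrow> aeval (fiW P i e) s = aeval i s"
  by (simp add: fiW_def mask_eval)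
lemma fiR_b1: "s1 bvar = 1 \<Longrightarrow> s2 bvar = 1 \<Longrightarrow> pub_equiv P s1 s2 \<Longrightarrow>
   aeval (fiR P x i) s1 = aeval (fiR P x i) s2"
  by (auto simp: fiR_def mask_eval intro: aeval_pubE)
lemma fiW_b1: "s1 bvar = 1 \<Longrightarrow> s2 bvar = 1 \<Longrightarrow> pub_equiv P s1 s2 \<Longrightarrow>
   aeval (fiW P i e) s1 = aeval (fiW P i e) s2"
  by (auto simp: fiW_def mask_eval intro: aeval_pubE)
lemma fiR_0: "s bvar = 1 \<Longrightarrow> P x \<or> \<not> alabel P i \<Longrightarrow> aeval (fiR P x i) s = 0"
  by (auto simp: fiR_def mask_eval)
lemma fiW_0: "s bvar = 1 \<Longrightarrow> \<not> alabel P e \<or> \<not> alabel P i \<Longrightarrow> aeval (fiW P i e) s = 0"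
  by (auto simp: fiW_def mask_eval)

abbreviation A1 :: "(vname \<Rightarrow> bool) \<Rightarrow> bexp \<Rightarrow> com" where
  "A1 P be \<equiv> Asgn bvar (ACond (fiB P be) (AVar bvar) (ANum 1))"
abbreviation A2 :: "(vname \<Rightarrow> bool) \<Rightarrow> bexp \<Rightarrow> com" where
  "A2 P be \<equiv> Asgn bvar (ACond (fiB P be) (ANum 1) (AVar bvar))"
abbreviation LW :: "(vname \<Rightarrow> bool) \<Rightarrow> bexp \<Rightarrow> com \<Rightarrow> com" where
  "LW P be C \<equiv> While (fiB P be) (Seq (A1 P be) C)"

lemma seq_Skip: "seq_step Skip s m os c' s' m' \<Longrightarrow> False"
  by (cases rule: seq_step.cases) auto

lemma seq_Seq: "seq_step (Seq c1 c2) s m os c' s' m' \<Longrightarrow>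
  (c1 = Skip \<and> os = [] \<and> c' = c2 \<and> s' = s \<and> m' = m) \<or>
  (\<exists>c1'. seq_step c1 s m os c1' s' m' \<and> c' = Seq c1' c2)"
  by (cases rule: seq_step.cases) auto

inductive_cases seq_AsgnE: "seq_step (Asgn x e) s m os c' s' m'"
inductive_cases seq_IfE: "seq_step (com.If b c1 c2) s m os c' s' m'"
inductive_cases seq_WhileE: "seq_step (While b c) s m os c' s' m'"
inductive_cases seq_ReadE: "seq_step (ARead x a i) s m os c' s' m'"
inductive_cases seq_WriteE: "seq_step (AWrite a i e) s m os c' s' m'"

lemma spec_Skip: "spec_step Skip s m f ds os c' s' m' f' \<Longrightarrow> False"
  by (ind_cases "spec_step Skip s m f ds os c' s' m' f'")

inductive_cases spec_SeqE: "spec_step (Seq c1 c2) s m f ds os c' s' m' f'"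

lemma spec_Seq: "spec_step (Seq c1 c2) s m f ds os c' s' m' f' \<Longrightarrow>
  (c1 = Skip \<and> ds = [] \<and> os = [] \<and> c' = c2 \<and> s' = s \<and> m' = m \<and> f' = f) \<or>
  (\<exists>c1'. spec_step c1 s m f ds os c1' s' m' f' \<and> c' = Seq c1' c2)"
  by (erule spec_SeqE) auto

inductive_cases spec_AsgnE: "spec_step (Asgn x e) s m f ds os c' s' m' f'"
inductive_cases spec_IfE: "spec_step (com.If b c1 c2) s m f ds os c' s' m' f'"
inductive_cases spec_WhileE: "spec_step (While b c) s m f ds os c' s' m' f'"
inductive_cases spec_ReadE: "spec_step (ARead x a i) s m f ds os c' s' m' f'"
inductive_cases spec_WriteE: "spec_step (AWrite a i e) s m f ds os c' s' m' f'"

section \<open>Sequential simulation of the translation\<close>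

lemma fislh_Skip: "fislh P c = Skip \<longleftrightarrow> c = Skip"
  by (cases c) auto
lemma fislh_Skip2: "Skip = fislh P c \<longleftrightarrow> c = Skip"
  by (cases c) auto

inductive tr :: "(vname \<Rightarrow> bool) \<Rightarrow> com \<Rightarrow> com \<Rightarrow> sstate \<Rightarrow> bool" for P where
  T_base: "bvar \<notin> used_vars c \<Longrightarrow> s bvar = 0 \<Longrightarrow> (\<forall>c1 c2. c \<noteq> Seq c1 c2) \<Longrightarrow> tr P (fislh P c) c s"
| T_seq: "tr P C c s \<Longrightarrow> bvar \<notin> used_vars c2 \<Longrightarrow> tr P (Seq C (fislh P c2)) (Seq c c2) s"
| T_thn: "beval (fiB P be) s \<Longrightarrow> tr P C c s \<Longrightarrow> tr P (Seq (A1 P be) C) c s"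
| T_els: "\<not> beval (fiB P be) s \<Longrightarrow> tr P C c s \<Longrightarrow> tr P (Seq (A2 P be) C) c s"
| T_skip: "tr P C c s \<Longrightarrow> tr P (Seq Skip C) c s"
| T_loop: "tr P C c s \<Longrightarrow> bvar \<notin> used_vars (While be c0) \<Longrightarrow>
    tr P (Seq (Seq C (LW P be (fislh P c0))) (A2 P be)) (Seq c (While be c0)) s"
| T_wif: "bvar \<notin> used_vars (While be c0) \<Longrightarrow> s bvar = 0 \<Longrightarrow>
    tr P (Seq (If (fiB P be) (Seq (Seq (A1 P be) (fislh P c0)) (LW P be (fislh P c0))) Skip) (A2 P be))
      (If be (Seq c0 (While be c0)) Skip) s"
| T_exit: "\<not> beval (fiB P be) s \<Longrightarrow> s bvar = 0 \<Longrightarrow> tr P (A2 P be) Skip s"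

lemma tr_b0: "tr P C c s \<Longrightarrow> s bvar = 0"
  by (induction rule: tr.induct) auto

lemma T_base': "bvar \<notin> used_vars c \<Longrightarrow> s bvar = 0 \<Longrightarrow> \<not>(\<exists>c1 c2. c = Seq c1 c2) \<Longrightarrow> tr P (fislh P c) c s"
  by (rule T_base) auto

lemma tr_fislh: "bvar \<notin> used_vars c \<Longrightarrow> s bvar = 0 \<Longrightarrow> tr P (fislh P c) c s"
proof (induction c)
  case (Seq c1 c2)
  then show ?case using T_seq[of P "fislh P c1" c1 s c2] by simp
qed ((rule T_base'; simp)+)

lemma tr_SkipSkip: "s bvar = 0 \<Longrightarrow> tr P Skip Skip s"
  using T_base[of Skip s P] by simp

lemma tr_Skip: "tr P Skip c s \<Longrightarrow> c = Skip"
  by (cases rule: tr.cases) (auto simp: fislh_Skip fislh_Skip2)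





lemma tr_sim:
  assumes "tr P C c s" "seq_step C s m os C' s' m'"
  shows "(os = [] \<and> s' = s \<and> m' = m \<and> tr P C' c s) \<or> (\<exists>c'. seq_step c s m os c' s' m' \<and> tr P C' c' s')"
  using assms
proof (induction arbitrary: m os C' s' m' rule: tr.induct)
  case (T_base c s)
  show ?case
  proof (cases c)
    case Skip with T_base show ?thesis by (auto dest: seq_Skip)
  next
    case (Asgn x e)
    with T_base have "os = [] \<and> C' = Skip \<and> s' = s(x := aeval e s) \<and> m' = m"
      by (auto elim: seq_AsgnE)
    moreover have "x \<noteq> bvar" using T_base Asgn by auto
    ultimately show ?thesis using T_base Asgn
      by (auto intro!: exI[of _ Skip] seq_step.intros tr_SkipSkip)
  next
    case (Seq c1 c2) with T_base show ?thesis by auto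
  next
    case (If be c1 c2)
    with T_base have st: "os = [OBranch (beval (fiB P be) s)] \<and> s' = s \<and> m' = m \<and>
      C' = (if beval (fiB P be) s then Seq (A1 P be) (fislh P c1) else Seq (A2 P be) (fislh P c2))"
      by (auto elim: seq_IfE)
    have eq: "beval (fiB P be) s = beval be s" using T_base fiB_b0 by auto
    have s1: "seq_step c s m os (if beval be s then c1 else c2) s' m'"
      using st eq If seq_step.If by metis
    have "tr P C' (if beval be s then c1 else c2) s'"
    proof (cases "beval be s")
      case True
      then have "C' = Seq (A1 P be) (fislh P c1)" "s' = s" using st eq by auto
      moreover have "tr P (fislh P c1) c1 s" using T_base If by (auto intro: tr_fislh)
      ultimately show ?thesis using True eq T_thn[of P be s "fislh P c1" c1] by simp
    next
      case False
      then have "C' = Seq (A2 P be) (fislh P c2)" "s' = s" using st eq by auto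
      moreover have "tr P (fislh P c2) c2 s" using T_base If by (auto intro: tr_fislh)
      ultimately show ?thesis using False eq T_els[of P be s "fislh P c2" c2] by simp
    qed
    then show ?thesis using s1 by blast
  next
    case (While be c0)
    with T_base have st: "os = [] \<and> s' = s \<and> m' = m \<and>
      C' = Seq (If (fiB P be) (Seq (Seq (A1 P be) (fislh P c0)) (LW P be (fislh P c0))) Skip) (A2 P be)"
      by (auto dest!: seq_Seq elim: seq_WhileE)
    have "seq_step c s m os (If be (Seq c0 (While be c0)) Skip) s' m'"
      using st While seq_step.While by metis
    moreover have "tr P C' (If be (Seq c0 (While be c0)) Skip) s'"
      using st T_base While T_wif[of be c0 s P] by auto
    ultimately show ?thesis by blast
  next
    case (ARead x a i)
    have ev: "aeval (fiR P x i) s = aeval i s" using T_base fiR_b0 by auto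
    with T_base ARead have st: "os = [ORead a (aeval i s)] \<and> C' = Skip \<and> s' = s(x := m a ! aeval i s) \<and> m' = m
       \<and> aeval i s < length (m a)"
      by (auto elim: seq_ReadE)
    moreover have "x \<noteq> bvar" using T_base ARead by auto
    ultimately have "s' bvar = 0" using T_base by simp
    then have t: "tr P C' Skip s'" using st tr_SkipSkip[of s' P] by simp
    have "seq_step c s m os Skip s' m'" using st ARead seq_step.Read[of i s m a x] by simp
    with t show ?thesis by (intro disjI2 exI[of _ Skip] conjI)
  next
    case (AWrite a i e)
    have ev: "aeval (fiW P i e) s = aeval i s" using T_base fiW_b0 by auto
    with T_base AWrite have st: "os = [OWrite a (aeval i s)] \<and> C' = Skip \<and> s' = s \<and>
       m' = m(a := (m a)[aeval i s := aeval e s]) \<and> aeval i s < length (m a)"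
      by (auto elim: seq_WriteE)
    then obtain h1: "os = [OWrite a (aeval i s)]" and h2: "C' = Skip" and h3: "s' = s"
      and h4: "m' = m(a := (m a)[aeval i s := aeval e s])" and h5: "aeval i s < length (m a)" by (elim conjE)
    have "seq_step c s m os Skip s' m'" unfolding h1 h3 h4 AWrite by (rule seq_step.Write[of i s m a e, OF h5])
    moreover have t: "tr P C' Skip s'" unfolding h2 h3 by (rule tr_SkipSkip[of s P, OF T_base.hyps(2)])
    ultimately show ?thesis by (intro disjI2 exI[of _ Skip] conjI)
  qed
next
  case (T_seq C c s c2)
  from seq_Seq[OF T_seq.prems] show ?case
  proof
    assume h: "C = Skip \<and> os = [] \<and> C' = fislh P c2 \<and> s' = s \<and> m' = m"
    then have "c = Skip" using T_seq.hyps(1) tr_Skip[of P c s] by simp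
    moreover have "tr P C' c2 s" using h T_seq.hyps(2) tr_fislh[of c2 s P] tr_b0[OF T_seq.hyps(1)] by simp
    ultimately show ?thesis using h by (auto intro: seq_step.SeqSkip)
  next
    assume "\<exists>c1'. seq_step C s m os c1' s' m' \<and> C' = Seq c1' (fislh P c2)"
    then obtain c1' where h: "seq_step C s m os c1' s' m'" "C' = Seq c1' (fislh P c2)" by blast
    from T_seq.IH[OF h(1)] show ?thesis
    proof
      assume a: "os = [] \<and> s' = s \<and> m' = m \<and> tr P c1' c s"
      then show ?thesis using h T_seq.hyps(2) tr.T_seq[of P c1' c s c2] by simp
    next
      assume "\<exists>c'. seq_step c s m os c' s' m' \<and> tr P c1' c' s'"
      then obtain c' where a: "seq_step c s m os c' s' m'" "tr P c1' c' s'" by blast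
      have "seq_step (Seq c c2) s m os (Seq c' c2) s' m'" using a(1) by (rule seq_step.Seq)
      moreover have "tr P C' (Seq c' c2) s'" using h a T_seq.hyps(2) tr.T_seq[of P c1' c' s' c2] by simp
      ultimately show ?thesis by (intro disjI2 exI[of _ "Seq c' c2"] conjI)
    qed
  qed
next
  case (T_thn be s C c)
  from seq_Seq[OF T_thn.prems] obtain c1' where
    h: "seq_step (A1 P be) s m os c1' s' m'" "C' = Seq c1' C" by auto
  then have "os = [] \<and> c1' = Skip \<and> s' = s \<and> m' = m" using T_thn
    by (auto elim!: seq_AsgnE)
  then show ?case using h T_thn by (auto intro: T_skip)
next
  case (T_els be s C c)
  from seq_Seq[OF T_els.prems] obtain c1' where
    h: "seq_step (A2 P be) s m os c1' s' m'" "C' = Seq c1' C" by auto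
  then have "os = [] \<and> c1' = Skip \<and> s' = s \<and> m' = m" using T_els tr_b0[OF T_els.hyps(2)]
    by (auto elim!: seq_AsgnE)
  then show ?case using h T_els by (auto intro: T_skip)
next
  case (T_skip C c s)
  from seq_Seq[OF T_skip.prems] show ?case using T_skip by (auto dest: seq_Skip)
next
  case (T_loop C c s be c0)
  from seq_Seq[OF T_loop.prems] obtain X' where
    h: "seq_step (Seq C (LW P be (fislh P c0))) s m os X' s' m'" "C' = Seq X' (A2 P be)" by auto
  from seq_Seq[OF h(1)] show ?case
  proof
    assume h2: "C = Skip \<and> os = [] \<and> X' = LW P be (fislh P c0) \<and> s' = s \<and> m' = m"
    then have "c = Skip" using T_loop.hyps(1) tr_Skip[of P c s] by simp
    moreover have "tr P C' (While be c0) s"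
      using h h2 T_loop.hyps(2) tr_fislh[of "While be c0" s P] tr_b0[OF T_loop.hyps(1)] by simp
    ultimately show ?thesis using h2 by (auto intro: seq_step.SeqSkip)
  next
    assume "\<exists>c1'. seq_step C s m os c1' s' m' \<and> X' = Seq c1' (LW P be (fislh P c0))"
    then obtain c1' where h2: "seq_step C s m os c1' s' m'" "X' = Seq c1' (LW P be (fislh P c0))" by blast
    from T_loop.IH[OF h2(1)] show ?thesis
    proof
      assume a: "os = [] \<and> s' = s \<and> m' = m \<and> tr P c1' c s"
      then show ?thesis using h h2 T_loop.hyps(2) tr.T_loop[of P c1' c s be c0] by simp
    next
      assume "\<exists>c'. seq_step c s m os c' s' m' \<and> tr P c1' c' s'"
      then obtain c' where a: "seq_step c s m os c' s' m'" "tr P c1' c' s'" by blast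
      have "seq_step (Seq c (While be c0)) s m os (Seq c' (While be c0)) s' m'" using a(1) by (rule seq_step.Seq)
      moreover have "tr P C' (Seq c' (While be c0)) s'"
        using h h2 a T_loop.hyps(2) tr.T_loop[of P c1' c' s' be c0] by simp
      ultimately show ?thesis by (intro disjI2 exI[of _ "Seq c' (While be c0)"] conjI)
    qed
  qed
next
  case (T_wif be c0 s)
  from seq_Seq[OF T_wif.prems] obtain X' where
    h: "seq_step (If (fiB P be) (Seq (Seq (A1 P be) (fislh P c0)) (LW P be (fislh P c0))) Skip) s m os X' s' m'"
       "C' = Seq X' (A2 P be)" by auto
  have eq: "beval (fiB P be) s = beval be s" using T_wif fiB_b0 by auto
  from h(1) have st: "os = [OBranch (beval be s)] \<and> s' = s \<and> m' = m \<and>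
     X' = (if beval be s then Seq (Seq (A1 P be) (fislh P c0)) (LW P be (fislh P c0)) else Skip)"
    using eq by (auto elim: seq_IfE)
  have s1: "seq_step (If be (Seq c0 (While be c0)) Skip) s m os
     (if beval be s then Seq c0 (While be c0) else Skip) s' m'"
    using st seq_step.If by metis
  have "tr P C' (if beval be s then Seq c0 (While be c0) else Skip) s'"
  proof (cases "beval be s")
    case True
    have "tr P (fislh P c0) c0 s" using T_wif tr_fislh[of c0 s P] by simp
    then have "tr P (Seq (A1 P be) (fislh P c0)) c0 s" using True eq T_thn[of P be s "fislh P c0" c0] by simp
    then show ?thesis using st h T_wif True tr.T_loop[of P "Seq (A1 P be) (fislh P c0)" c0 s be c0]
      by simp
  next
    case False
    then show ?thesis using st h T_wif eq T_skip T_exit[of P be s]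
      by auto
  qed
  then show ?case using s1 by blast
next
  case (T_exit be s)
  then have "os = [] \<and> C' = Skip \<and> s' = s \<and> m' = m"
    by (auto elim!: seq_AsgnE)
  then show ?case using T_exit tr_SkipSkip[of s P] by simp
qed




definition Inv0 :: "com \<Rightarrow> sstate \<Rightarrow> astate \<Rightarrow> bool" where
  "Inv0 C s m \<longleftrightarrow> (\<forall>os C' s' m'. seq_steps C s m os C' s' m' \<longrightarrow> s' bvar = 0)"

lemma tr_sims:
  assumes "seq_steps C s m os C' s' m'" "tr P C c s"
  shows "s' bvar = 0 \<and> (\<exists>c'. seq_steps c s m os c' s' m')"
  using assms
proof (induction arbitrary: c rule: seq_steps.induct)
  case (refl C s m)
  then show ?case using tr_b0[of P C c s] seq_steps.refl by blast
next
  case (step C s m os1 C1 s1 m1 os2 C2 s2 m2)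
  from tr_sim[OF step.prems step.hyps(1)] show ?case
  proof
    assume a: "os1 = [] \<and> s1 = s \<and> m1 = m \<and> tr P C1 c s"
    then show ?thesis using step.IH[of c] by simp
  next
    assume "\<exists>c'. seq_step c s m os1 c' s1 m1 \<and> tr P C1 c' s1"
    then obtain c' where a: "seq_step c s m os1 c' s1 m1" "tr P C1 c' s1" by blast
    from step.IH[OF a(2)] obtain c'' where "s2 bvar = 0" "seq_steps c' s1 m1 os2 c'' s2 m2" by blast
    then show ?thesis using seq_steps.step[OF a(1)] by blast
  qed
qed

lemma init_seq:
  assumes "bvar \<notin> used_vars c" "s1 bvar = 0" "s2 bvar = 0" "seq_obs_eqv c s1 m1 c s2 m2"
  shows "seq_obs_eqv (fislh P c) s1 m1 (fislh P c) s2 m2" "Inv0 (fislh P c) s1 m1" "Inv0 (fislh P c) s2 m2"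
proof -
  have t1: "tr P (fislh P c) c s1" using assms tr_fislh[of c s1 P] by simp
  have t2: "tr P (fislh P c) c s2" using assms tr_fislh[of c s2 P] by simp
  show "seq_obs_eqv (fislh P c) s1 m1 (fislh P c) s2 m2"
    unfolding seq_obs_eqv_def
  proof (intro allI impI)
    fix os1 os2 c1' s1' m1' c2' s2' m2'
    assume "seq_steps (fislh P c) s1 m1 os1 c1' s1' m1'" "seq_steps (fislh P c) s2 m2 os2 c2' s2' m2'"
    with tr_sims[OF _ t1] tr_sims[OF _ t2] obtain d1 d2 where
      "seq_steps c s1 m1 os1 d1 s1' m1'" "seq_steps c s2 m2 os2 d2 s2' m2'" by blast
    then show "prefix os1 os2 \<or> prefix os2 os1" using assms(4) unfolding seq_obs_eqv_def by blast
  qed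
  show "Inv0 (fislh P c) s1 m1" unfolding Inv0_def using tr_sims[OF _ t1] by blast
  show "Inv0 (fislh P c) s2 m2" unfolding Inv0_def using tr_sims[OF _ t2] by blast
qed

section \<open>Structural invariants of speculative commands\<close>

inductive ok :: "(vname \<Rightarrow> bool) \<Rightarrow> (aname \<Rightarrow> bool) \<Rightarrow> com \<Rightarrow> bool" for P PA where
  ok_Skip: "ok P PA Skip"
| ok_Asgn: "x \<noteq> bvar \<Longrightarrow> (P x \<longrightarrow> alabel P e) \<Longrightarrow> ok P PA (Asgn x e)"
| ok_A1: "ok P PA (A1 P be)"
| ok_A2: "ok P PA (A2 P be)"
| ok_Seq: "ok P PA C1 \<Longrightarrow> ok P PA C2 \<Longrightarrow> ok P PA (Seq C1 C2)"
| ok_If: "ok P PA C1 \<Longrightarrow> ok P PA C2 \<Longrightarrow> ok P PA (If (fiB P be) (Seq (A1 P be) C1) (Seq (A2 P be) C2))"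
| ok_While: "ok P PA C \<Longrightarrow> ok P PA (Seq (LW P be C) (A2 P be))"
| ok_WIf: "ok P PA C \<Longrightarrow> ok P PA (Seq (If (fiB P be) (Seq (Seq (A1 P be) C) (LW P be C)) Skip) (A2 P be))"
| ok_Loop: "ok P PA C \<Longrightarrow> ok P PA C' \<Longrightarrow> ok P PA (Seq (Seq C' (LW P be C)) (A2 P be))"
| ok_Read: "x \<noteq> bvar \<Longrightarrow> (P x \<longrightarrow> alabel P i \<and> PA a) \<Longrightarrow> ok P PA (ARead x a (fiR P x i))"
| ok_Write: "(PA a \<longrightarrow> alabel P i \<and> alabel P e) \<Longrightarrow> ok P PA (AWrite a (fiW P i e) e)"

fun wf :: "(vname \<Rightarrow> bool) \<Rightarrow> (aname \<Rightarrow> bool) \<Rightarrow> com \<Rightarrow> bool" where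
  "wf P PA Skip = True"
| "wf P PA (Asgn x e) = (if x = bvar then (\<exists>B. e = ACond B (AVar bvar) (ANum 1) \<or> e = ACond B (ANum 1) (AVar bvar))
     else (P x \<longrightarrow> alabel P e))"
| "wf P PA (Seq c1 c2) = (wf P PA c1 \<and> wf P PA c2)"
| "wf P PA (If B c1 c2) = ((\<exists>be. B = fiB P be) \<and> wf P PA c1 \<and> wf P PA c2)"
| "wf P PA (While B c) = ((\<exists>be. B = fiB P be) \<and> wf P PA c)"
| "wf P PA (ARead x a j) = (x \<noteq> bvar \<and> (\<exists>i. j = fiR P x i \<and> (P x \<longrightarrow> alabel P i \<and> PA a)))"
| "wf P PA (AWrite a j e) = (\<exists>i. j = fiW P i e \<and> (PA a \<longrightarrow> alabel P i \<and> alabel P e))"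

lemma ok_wf: "ok P PA C \<Longrightarrow> wf P PA C"
  by (induction rule: ok.induct) auto

lemma wt_ok: "well_typed P PA pc c \<Longrightarrow> bvar \<notin> used_vars c \<Longrightarrow> ok P PA (fislh P c)"
proof (induction rule: well_typed.induct)
  case (WT_Skip P PA pc)
  then show ?case using ok_Skip by simp
next
  case WT_Asgn
  then show ?case by (auto intro!: ok_Asgn simp: lle_def ljoin_def)
next
  case (WT_Seq P PA pc c1 c2)
  then show ?case using ok_Seq[of P PA "fislh P c1" "fislh P c2"] by simp
next
  case (WT_If P PA pc b c1 c2)
  then show ?case using ok_If[of P PA "fislh P c1" "fislh P c2" b] by simp
next
  case (WT_While P PA pc b c)
  then show ?case using ok_While[of P PA "fislh P c" b] by simp
next
  case WT_Read
  then show ?case by (auto intro!: ok_Read simp: lle_def ljoin_def)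
next
  case WT_Write
  then show ?case by (auto intro!: ok_Write simp: lle_def ljoin_def)
qed




fun needsD :: "com \<Rightarrow> bool" where
  "needsD (Seq c1 c2) = (if c1 = Skip then False else needsD c1)"
| "needsD (If b c1 c2) = True"
| "needsD (ARead x a i) = True"
| "needsD (AWrite a i e) = True"
| "needsD _ = False"

lemma spec_len:
  "spec_step C s m f ds os C' s' m' f' \<Longrightarrow>
   length os = length ds \<and> length ds \<le> 1 \<and> (ds = [] \<longleftrightarrow> \<not> needsD C) \<and> (\<forall>a. length (m' a) = length (m a))"
proof (induction rule: spec_step.induct)
  case (Seq c1 s m f ds os c1' s' m' f' c2)
  then have "c1 \<noteq> Skip" using spec_Skip by blast
  then show ?case using Seq by simp
qed auto

lemma spec_steps_len: "spec_steps C s m f ds os C' s' m' f' \<Longrightarrow> length os = length ds"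
  by (induction rule: spec_steps.induct) (auto dest: spec_len)

lemma det_cmd:
  "spec_step C s1 m1 f1 ds os C1 s1' m1' f1' \<Longrightarrow> spec_step C s2 m2 f2 ds os C2 s2' m2' f2' \<Longrightarrow> C1 = C2"
proof (induction arbitrary: s2 m2 f2 C2 s2' m2' f2' rule: spec_step.induct)
  case (Seq c1 s m f ds os c1' s' m' f' c2)
  from spec_Seq[OF Seq.prems] show ?case
  proof
    assume "c1 = Skip \<and> ds = [] \<and> os = [] \<and> C2 = c2 \<and> s2' = s2 \<and> m2' = m2 \<and> f2' = f2"
    then show ?thesis using Seq.hyps(1) spec_Skip by blast
  next
    assume "\<exists>c1'a. spec_step c1 s2 m2 f2 ds os c1'a s2' m2' f2' \<and> C2 = Seq c1'a c2"
    then show ?thesis using Seq.IH by blast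
  qed
next
  case (SeqSkip c s m f)
  from spec_Seq[OF SeqSkip.prems] show ?case using spec_Skip by blast
qed (auto elim: spec_AsgnE spec_IfE spec_WhileE spec_ReadE spec_WriteE)

lemma spec_to_seq:
  "spec_step C s m f ds os C' s' m' f' \<Longrightarrow> \<not> f \<Longrightarrow> ds \<noteq> [DForce] \<Longrightarrow> seq_step C s m os C' s' m' \<and> \<not> f'"
proof (induction rule: spec_step.induct)
  case (Seq c1 s m f ds os c1' s' m' f' c2)
  then show ?case by (auto intro: seq_step.Seq)
next
  case (Read ie s m a x f)
  show ?case by (rule conjI[OF seq_step.Read[of ie s m a x, OF Read.hyps] Read.prems(1)])
next
  case (Write ie s m a e f)
  show ?case by (rule conjI[OF seq_step.Write[of ie s m a e, OF Write.hyps] Write.prems(1)])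
next
  case (IfStep b c1 c2 s m f)
  show ?case by (rule conjI[OF seq_step.If IfStep.prems(1)])
qed (auto intro: seq_step.Asgn seq_step.SeqSkip seq_step.While)

lemma force_seq:
  "spec_step C s m f ds os C' s' m' f' \<Longrightarrow> ds = [DForce] \<Longrightarrow>
   (\<exists>C''. seq_step C s m os C'' s m) \<and> s' = s \<and> m' = m \<and> f'"
proof (induction rule: spec_step.induct)
  case (Seq c1 s m f ds os c1' s' m' f' c2)
  then show ?case by (auto intro: seq_step.Seq)
qed (auto intro: seq_step.If)

fun pendB :: "com \<Rightarrow> sstate \<Rightarrow> bool" where
  "pendB (Seq c1 c2) s = (if c1 = Skip then pendB c2 s else pendB c1 s)"
| "pendB (Asgn x e) s = (x = bvar \<and> aeval e s = 1)"
| "pendB _ s = False"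

fun hdA :: "com \<Rightarrow> bool" where
  "hdA (Seq c1 c2) = (c1 \<noteq> Skip \<and> hdA c1)"
| "hdA (Asgn x e) = True"
| "hdA _ = False"

lemma pend_step:
  "spec_step C s m f ds os C' s' m' f' \<Longrightarrow> pendB C s \<Longrightarrow>
   ds = [] \<and> os = [] \<and> m' = m \<and> f' = f \<and> (if hdA C then s' = s(bvar := 1) else s' = s \<and> pendB C' s)"
proof (induction rule: spec_step.induct)
  case (Seq c1 s m f ds os c1' s' m' f' c2)
  then have "c1 \<noteq> Skip" using spec_Skip by blast
  then show ?case using Seq by (auto split: if_splits)
qed auto




lemma ok_step:
  assumes "ok P PA C" "spec_step C s m f ds os C' s' m' f'"
  shows "ok P PA C'"
  using assms
proof (induction arbitrary: s m f ds os C' s' m' f' rule: ok.induct)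
  case ok_Skip then show ?case using spec_Skip by blast
next
  case (ok_Asgn x e) then show ?case by (auto elim: spec_AsgnE intro: ok.ok_Skip)
next
  case (ok_A1 be) then show ?case by (auto elim: spec_AsgnE intro: ok.ok_Skip)
next
  case (ok_A2 be) then show ?case by (auto elim: spec_AsgnE intro: ok.ok_Skip)
next
  case (ok_Seq C1 C2)
  from spec_Seq[OF ok_Seq.prems] show ?case
  proof
    assume "C1 = Skip \<and> ds = [] \<and> os = [] \<and> C' = C2 \<and> s' = s \<and> m' = m \<and> f' = f"
    then show ?thesis using ok_Seq.hyps(2) by simp
  next
    assume "\<exists>c1'. spec_step C1 s m f ds os c1' s' m' f' \<and> C' = Seq c1' C2"
    then obtain c1' where "spec_step C1 s m f ds os c1' s' m' f'" "C' = Seq c1' C2" by blast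
    then show ?thesis using ok_Seq.IH(1) ok_Seq.hyps(2) ok.ok_Seq by blast
  qed
next
  case (ok_If C1 C2 be)
  have a1: "ok P PA (Seq (A1 P be) C1)" by (rule ok.ok_Seq[OF ok.ok_A1 ok_If.hyps(1)])
  have a2: "ok P PA (Seq (A2 P be) C2)" by (rule ok.ok_Seq[OF ok.ok_A2 ok_If.hyps(2)])
  from ok_If.prems a1 a2 show ?case by (auto elim: spec_IfE)
next
  case (ok_While C be)
  have w: "ok P PA (Seq (If (fiB P be) (Seq (Seq (A1 P be) C) (LW P be C)) Skip) (A2 P be))"
    by (rule ok_WIf[OF ok_While.hyps(1)])
  from spec_Seq[OF ok_While.prems] show ?case
  proof
    assume "\<exists>c1'. spec_step (LW P be C) s m f ds os c1' s' m' f' \<and> C' = Seq c1' (A2 P be)"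
    then obtain c1' where h: "spec_step (LW P be C) s m f ds os c1' s' m' f'" "C' = Seq c1' (A2 P be)" by blast
    from h(1) have "c1' = If (fiB P be) (Seq (Seq (A1 P be) C) (LW P be C)) Skip" by (auto elim: spec_WhileE)
    then show ?thesis using h(2) w by simp
  qed simp
next
  case (ok_WIf C be)
  have l: "ok P PA (Seq (Seq (Seq (A1 P be) C) (LW P be C)) (A2 P be))"
    by (rule ok_Loop[OF ok_WIf.hyps(1) ok.ok_Seq[OF ok.ok_A1 ok_WIf.hyps(1)]])
  have sk: "ok P PA (Seq Skip (A2 P be))" by (rule ok.ok_Seq[OF ok.ok_Skip ok.ok_A2])
  from spec_Seq[OF ok_WIf.prems] show ?case
  proof
    assume "\<exists>c1'. spec_step (If (fiB P be) (Seq (Seq (A1 P be) C) (LW P be C)) Skip) s m f ds os c1' s' m' f'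
       \<and> C' = Seq c1' (A2 P be)"
    then obtain c1' where h: "spec_step (If (fiB P be) (Seq (Seq (A1 P be) C) (LW P be C)) Skip) s m f ds os c1' s' m' f'"
      "C' = Seq c1' (A2 P be)" by blast
    have "c1' = Seq (Seq (A1 P be) C) (LW P be C) \<or> c1' = Skip" by (rule spec_IfE[OF h(1)]) auto
    then show ?thesis using h(2) l sk by auto
  qed simp
next
  case (ok_Loop C C0 be)
  from spec_Seq[OF ok_Loop.prems] show ?case
  proof
    assume "\<exists>c1'. spec_step (Seq C0 (LW P be C)) s m f ds os c1' s' m' f' \<and> C' = Seq c1' (A2 P be)"
    then obtain X where h: "spec_step (Seq C0 (LW P be C)) s m f ds os X s' m' f'" "C' = Seq X (A2 P be)" by blast
    from spec_Seq[OF h(1)] show ?thesis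
    proof
      assume "C0 = Skip \<and> ds = [] \<and> os = [] \<and> X = LW P be C \<and> s' = s \<and> m' = m \<and> f' = f"
      then show ?thesis using h(2) ok_While[OF ok_Loop.hyps(1)] by simp
    next
      assume "\<exists>c1'. spec_step C0 s m f ds os c1' s' m' f' \<and> X = Seq c1' (LW P be C)"
      then obtain c'' where "spec_step C0 s m f ds os c'' s' m' f'" "X = Seq c'' (LW P be C)" by blast
      then show ?thesis using h(2) ok_Loop.IH(2) ok.ok_Loop[OF ok_Loop.hyps(1)] by blast
    qed
  qed simp
next
  case (ok_Read x i a) then show ?case by (auto elim: spec_ReadE intro: ok.ok_Skip)
next
  case (ok_Write a i e) then show ?case by (auto elim: spec_WriteE intro: ok.ok_Skip)
qed

lemma force_pend:
  assumes "ok P PA C" "spec_step C s m f ds os C' s' m' f'" "ds = [DForce]"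
  shows "pendB C' s'"
  using assms
proof (induction arbitrary: s m f ds os C' s' m' f' rule: ok.induct)
  case (ok_Seq C1 C2)
  from spec_Seq[OF ok_Seq.prems(1)] show ?case
  proof
    assume "\<exists>c1'. spec_step C1 s m f ds os c1' s' m' f' \<and> C' = Seq c1' C2"
    then obtain c1' where h: "spec_step C1 s m f ds os c1' s' m' f'" "C' = Seq c1' C2" by blast
    have "pendB c1' s'" using ok_Seq.IH(1)[OF h(1) ok_Seq.prems(2)] .
    moreover then have "c1' \<noteq> Skip" by auto
    ultimately show ?thesis using h(2) by simp
  qed (use ok_Seq.prems in simp)
next
  case (ok_If C1 C2 be)
  from ok_If.prems show ?case by (auto elim: spec_IfE)
next
  case (ok_While C be)
  from spec_Seq[OF ok_While.prems(1)] show ?case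
  proof
    assume "\<exists>c1'. spec_step (LW P be C) s m f ds os c1' s' m' f' \<and> C' = Seq c1' (A2 P be)"
    then show ?thesis using ok_While.prems(2) by (auto elim: spec_WhileE)
  qed simp
next
  case (ok_WIf C be)
  from spec_Seq[OF ok_WIf.prems(1)] show ?case
  proof
    assume "\<exists>c1'. spec_step (If (fiB P be) (Seq (Seq (A1 P be) C) (LW P be C)) Skip) s m f ds os c1' s' m' f'
       \<and> C' = Seq c1' (A2 P be)"
    then show ?thesis using ok_WIf.prems(2) by (auto elim: spec_IfE)
  qed simp
next
  case (ok_Loop C C0 be)
  from spec_Seq[OF ok_Loop.prems(1)] show ?case
  proof
    assume "\<exists>c1'. spec_step (Seq C0 (LW P be C)) s m f ds os c1' s' m' f' \<and> C' = Seq c1' (A2 P be)"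
    then obtain X where h: "spec_step (Seq C0 (LW P be C)) s m f ds os X s' m' f'" "C' = Seq X (A2 P be)" by blast
    from spec_Seq[OF h(1)] show ?thesis
    proof
      assume "\<exists>c1'. spec_step C0 s m f ds os c1' s' m' f' \<and> X = Seq c1' (LW P be C)"
      then obtain c'' where h2: "spec_step C0 s m f ds os c'' s' m' f'" "X = Seq c'' (LW P be C)" by blast
      have "pendB c'' s'" using ok_Loop.IH(2)[OF h2(1) ok_Loop.prems(2)] .
      moreover then have "c'' \<noteq> Skip" by auto
      ultimately show ?thesis using h(2) h2(2) by simp
    qed (use ok_Loop.prems in simp)
  qed simp
qed (auto elim: spec_AsgnE spec_ReadE spec_WriteE dest: spec_Skip)




lemma Read_inv: "spec_step (ARead x a ie) s m f [DStep] os C' s' m' f' \<Longrightarrow>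
  os = [ORead a (aeval ie s)] \<and> C' = Skip \<and> s' = s(x := m a ! aeval ie s) \<and> m' = m \<and> f' = f \<and> aeval ie s < length (m a)"
  by (erule spec_ReadE) auto

lemma Load_inv: "spec_step (ARead x a ie) s m f [DLoad a' j] os C' s' m' f' \<Longrightarrow>
  os = [ORead a (aeval ie s)] \<and> C' = Skip \<and> s' = s(x := m a' ! j) \<and> m' = m \<and> f' = f \<and> f \<and>
  length (m a) \<le> aeval ie s \<and> j < length (m a')"
  by (erule spec_ReadE) auto

lemma Write_inv: "spec_step (AWrite a ie e) s m f [DStep] os C' s' m' f' \<Longrightarrow>
  os = [OWrite a (aeval ie s)] \<and> C' = Skip \<and> s' = s \<and> m' = m(a := (m a)[aeval ie s := aeval e s]) \<and> f' = f
   \<and> aeval ie s < length (m a)"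
  by (erule spec_WriteE) auto

lemma Store_inv: "spec_step (AWrite a ie e) s m f [DStore a' j] os C' s' m' f' \<Longrightarrow>
  os = [OWrite a (aeval ie s)] \<and> C' = Skip \<and> s' = s \<and> m' = m(a' := (m a')[j := aeval e s]) \<and> f' = f \<and> f
   \<and> length (m a) \<le> aeval ie s \<and> j < length (m a')"
  by (erule spec_WriteE) auto

lemma NI:
  assumes "spec_step C s1 m1 f ds os1 C1 s1' m1' f1'" "spec_step C s2 m2 f ds os2 C2 s2' m2' f2'"
    "wf P PA C" "pub_equiv P s1 s2" "s1 bvar = s2 bvar" "apub_equiv PA m1 m2"
    "\<forall>a. 0 < length (m1 a)" "\<forall>a. 0 < length (m2 a)" "os1 = os2 \<or> s1 bvar = 1" "\<not> f \<or> s1 bvar = 1"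
  shows "os1 = os2 \<and> f1' = f2' \<and> (\<forall>x. x \<noteq> bvar \<longrightarrow> P x \<longrightarrow> s1' x = s2' x) \<and> apub_equiv PA m1' m2' \<and>
    (s1 bvar = 1 \<longrightarrow> s1' bvar = 1 \<and> s2' bvar = 1)"
  using assms
proof (induction arbitrary: C2 s2' m2' f2' os2 rule: spec_step.induct)
  case (Asgn x e s m f)
  have h: "os2 = [] \<and> s2' = s2(x := aeval e s2) \<and> m2' = m2 \<and> f2' = f"
    by (rule spec_AsgnE[OF Asgn.prems(1)]) auto
  show ?case
  proof (cases "x = bvar")
    case True
    with Asgn.prems(2) obtain B where "e = ACond B (AVar bvar) (ANum 1) \<or> e = ACond B (ANum 1) (AVar bvar)" by auto
    then show ?thesis using h True Asgn.prems(3,4,5) by (auto simp: pub_equiv_def)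
  next
    case False
    with Asgn.prems(2) have "P x \<longrightarrow> alabel P e" by simp
    then have "P x \<longrightarrow> aeval e s = aeval e s2" using aeval_pubE[of P e s s2] Asgn.prems(3) by blast
    then show ?thesis using h False Asgn.prems(3,4,5) by (auto simp: pub_equiv_def)
  qed
next
  case (Seq c1 s m f ds os c1' s' m' f' c2)
  from spec_Seq[OF Seq.prems(1)] show ?case
  proof
    assume "c1 = Skip \<and> ds = [] \<and> os2 = [] \<and> C2 = c2 \<and> s2' = s2 \<and> m2' = m2 \<and> f2' = f"
    then show ?thesis using Seq.hyps(1) spec_Skip by blast
  next
    assume "\<exists>c1'. spec_step c1 s2 m2 f ds os2 c1' s2' m2' f2' \<and> C2 = Seq c1' c2"
    then obtain c'' where h: "spec_step c1 s2 m2 f ds os2 c'' s2' m2' f2'" by blast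
    have "wf P PA c1" using Seq.prems(2) by simp
    from Seq.IH[OF h this Seq.prems(3-9)] show ?thesis .
  qed
next
  case (SeqSkip c s m f)
  from spec_Seq[OF SeqSkip.prems(1)] show ?case
  proof
    assume "Skip = Skip \<and> [] = [] \<and> os2 = [] \<and> C2 = c \<and> s2' = s2 \<and> m2' = m2 \<and> f2' = f"
    then show ?thesis using SeqSkip.prems(3,4,5) by (auto simp: pub_equiv_def)
  next
    assume "\<exists>c1'. spec_step Skip s2 m2 f [] os2 c1' s2' m2' f2' \<and> C2 = Seq c1' c"
    then show ?thesis using spec_Skip by blast
  qed
next
  case (IfStep b c1 c2 s m f)
  have h: "os2 = [OBranch (beval b s2)] \<and> s2' = s2 \<and> m2' = m2 \<and> f2' = f"
    by (rule spec_IfE[OF IfStep.prems(1)]) auto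
  have "beval b s = beval b s2"
  proof (cases "s bvar = 1")
    case True
    obtain be where "b = fiB P be" using IfStep.prems(2) by auto
    then show ?thesis using fiB_b1[of s s2 P be] True IfStep.prems(3,4) by simp
  next
    case False then show ?thesis using IfStep.prems(8) h by simp
  qed
  then show ?case using h IfStep.prems(3,4,5) by (auto simp: pub_equiv_def)
next
  case (IfForce b c1 c2 s m f)
  have h: "os2 = [OBranch (beval b s2)] \<and> s2' = s2 \<and> m2' = m2 \<and> f2' = True"
    by (rule spec_IfE[OF IfForce.prems(1)]) auto
  have "beval b s = beval b s2"
  proof (cases "s bvar = 1")
    case True
    obtain be where "b = fiB P be" using IfForce.prems(2) by auto
    then show ?thesis using fiB_b1[of s s2 P be] True IfForce.prems(3,4) by simp
  next
    case False then show ?thesis using IfForce.prems(8) h by simp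
  qed
  then show ?case using h IfForce.prems(3,4,5) by (auto simp: pub_equiv_def)
next
  case (While b c s m f)
  have h: "os2 = [] \<and> s2' = s2 \<and> m2' = m2 \<and> f2' = f"
    by (rule spec_WhileE[OF While.prems(1)]) auto
  then show ?case using While.prems(3,4,5) by (auto simp: pub_equiv_def)
next
  case (Read ie s m a x f)
  from Read_inv[OF Read.prems(1)] have h: "os2 = [ORead a (aeval ie s2)]" "s2' = s2(x := m2 a ! aeval ie s2)"
    "m2' = m2" "f2' = f" by auto
  obtain i where wf: "x \<noteq> bvar" "ie = fiR P x i" "P x \<longrightarrow> alabel P i \<and> PA a" using Read.prems(2) by auto
  have ix: "aeval ie s = aeval ie s2"
  proof (cases "s bvar = 1")
    case True
    then show ?thesis using fiR_b1[of s s2 P x i] wf Read.prems(3,4) by simp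
  next
    case False then show ?thesis using Read.prems(8) h by simp
  qed
  have "P x \<longrightarrow> m a ! aeval ie s = m2 a ! aeval ie s2"
    using ix wf Read.prems(5) by (auto simp: apub_equiv_def)
  then show ?case using h ix wf Read.prems(3,4,5) by (auto simp: pub_equiv_def)
next
  case (ReadLoad f ie s m a j a' x)
  from Load_inv[OF ReadLoad.prems(1)] have h: "os2 = [ORead a (aeval ie s2)]" "s2' = s2(x := m2 a' ! j)"
    "m2' = m2" "f2' = f" by auto
  obtain i where wf: "x \<noteq> bvar" "ie = fiR P x i" "P x \<longrightarrow> alabel P i \<and> PA a" using ReadLoad.prems(2) by auto
  have b1: "s bvar = 1" using ReadLoad.prems(9) ReadLoad.hyps(1) by simp
  have ix: "aeval ie s = aeval ie s2"
    using fiR_b1[of s s2 P x i] wf b1 ReadLoad.prems(3,4) by simp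
  have "\<not> P x"
  proof
    assume "P x"
    then have "aeval ie s = 0" using fiR_0[of s P x i] wf b1 by simp
    then show False using ReadLoad.hyps(2) ReadLoad.prems(6) by (metis not_le)
  qed
  then show ?case using h ix wf b1 ReadLoad.prems(3,4,5) by (auto simp: pub_equiv_def)
next
  case (Write ie s m a e f)
  from Write_inv[OF Write.prems(1)] have h: "os2 = [OWrite a (aeval ie s2)]" "s2' = s2"
    "m2' = m2(a := (m2 a)[aeval ie s2 := aeval e s2])" "f2' = f" by auto
  obtain i where wf: "ie = fiW P i e" "PA a \<longrightarrow> alabel P i \<and> alabel P e" using Write.prems(2) by auto
  have ix: "aeval ie s = aeval ie s2"
  proof (cases "s bvar = 1")
    case True
    then show ?thesis using fiW_b1[of s s2 P i e] wf Write.prems(3,4) by simp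
  next
    case False then show ?thesis using Write.prems(8) h by simp
  qed
  have "PA a \<longrightarrow> aeval e s = aeval e s2" using wf aeval_pubE[of P e s s2] Write.prems(3) by blast
  then have c4: "apub_equiv PA (m(a := (m a)[aeval ie s := aeval e s])) m2'"
    using h ix Write.prems(5) by (auto simp: apub_equiv_def)
  have c1: "[OWrite a (aeval ie s)] = os2" using h ix by simp
  have c2: "f = f2'" using h by simp
  have c3: "\<forall>x. x \<noteq> bvar \<longrightarrow> P x \<longrightarrow> s x = s2' x" using h Write.prems(3) by (auto simp: pub_equiv_def)
  have c5: "s bvar = 1 \<longrightarrow> s bvar = 1 \<and> s2' bvar = 1" using h Write.prems(4) by simp
  show ?case by (intro conjI c1 c2 c3 c4 c5)
next
  case (WriteStore f ie s m a j a' e)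
  from Store_inv[OF WriteStore.prems(1)] have h: "os2 = [OWrite a (aeval ie s2)]" "s2' = s2"
    "m2' = m2(a' := (m2 a')[j := aeval e s2])" "f2' = f" by auto
  obtain i where wf: "ie = fiW P i e" "PA a \<longrightarrow> alabel P i \<and> alabel P e" using WriteStore.prems(2) by auto
  have b1: "s bvar = 1" using WriteStore.prems(9) WriteStore.hyps(1) by simp
  have ix: "aeval ie s = aeval ie s2"
    using fiW_b1[of s s2 P i e] wf b1 WriteStore.prems(3,4) by simp
  have "alabel P e"
  proof (rule ccontr)
    assume "\<not> alabel P e"
    then have "aeval ie s = 0" using fiW_0[of s P e i] wf b1 by simp
    then show False using WriteStore.hyps(2) WriteStore.prems(6) by (metis not_le)
  qed
  then have "aeval e s = aeval e s2" using aeval_pubE[of P e s s2] WriteStore.prems(3) by blast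
  then have c4: "apub_equiv PA (m(a' := (m a')[j := aeval e s])) m2'"
    using h WriteStore.prems(5) by (auto simp: apub_equiv_def)
  have c1: "[OWrite a (aeval ie s)] = os2" using h ix by simp
  have c2: "f = f2'" using h by simp
  have c3: "\<forall>x. x \<noteq> bvar \<longrightarrow> P x \<longrightarrow> s x = s2' x" using h WriteStore.prems(3) by (auto simp: pub_equiv_def)
  have c5: "s bvar = 1 \<longrightarrow> s bvar = 1 \<and> s2' bvar = 1" using h WriteStore.prems(4) by simp
  show ?case by (intro conjI c1 c2 c3 c4 c5)
qed




definition Rel :: "(vname \<Rightarrow> bool) \<Rightarrow> (aname \<Rightarrow> bool) \<Rightarrow> com \<Rightarrow> sstate \<Rightarrow> astate \<Rightarrow> bool \<Rightarrow> sstate \<Rightarrow> astate \<Rightarrow> bool \<Rightarrow> bool" where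
  "Rel P PA C s1 m1 f1 s2 m2 f2 \<longleftrightarrow> ok P PA C \<and> f1 = f2 \<and> s1 bvar = s2 bvar \<and> pub_equiv P s1 s2 \<and>
     apub_equiv PA m1 m2 \<and> (\<forall>a. 0 < length (m1 a)) \<and> (\<forall>a. 0 < length (m2 a)) \<and>
     ((\<not> f1 \<and> s1 bvar = 0 \<and> seq_obs_eqv C s1 m1 C s2 m2 \<and> Inv0 C s1 m1 \<and> Inv0 C s2 m2) \<or>
      s1 bvar = 1 \<or> (pendB C s1 \<and> pendB C s2))"

lemma prefix_same_len: "prefix xs ys \<or> prefix ys xs \<Longrightarrow> length xs = length ys \<Longrightarrow> xs = ys"
  by (auto simp: prefix_def)

lemma one_step_steps: "seq_step C s m os C' s' m' \<Longrightarrow> seq_steps C s m os C' s' m'"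
  using seq_steps.step[OF _ seq_steps.refl] by fastforce

lemma Inv0_step: "Inv0 C s m \<Longrightarrow> seq_step C s m os C' s' m' \<Longrightarrow> Inv0 C' s' m' \<and> s' bvar = 0"
  unfolding Inv0_def using seq_steps.step seq_steps.refl by blast

lemma seq_eqv_step: "seq_obs_eqv C s1 m1 C s2 m2 \<Longrightarrow> seq_step C s1 m1 os C1 s1' m1' \<Longrightarrow>
   seq_step C s2 m2 os C1 s2' m2' \<Longrightarrow> seq_obs_eqv C1 s1' m1' C1 s2' m2'"
  unfolding seq_obs_eqv_def
proof (intro allI impI)
  fix os1 os2 c1' s1'' m1'' c2' s2'' m2''
  assume a: "\<forall>os1 os2 c1' s1' m1' c2' s2' m2'.
       seq_steps C s1 m1 os1 c1' s1' m1' \<longrightarrow> seq_steps C s2 m2 os2 c2' s2' m2' \<longrightarrow> prefix os1 os2 \<or> prefix os2 os1"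
    and b: "seq_step C s1 m1 os C1 s1' m1'" "seq_step C s2 m2 os C1 s2' m2'"
    and c: "seq_steps C1 s1' m1' os1 c1' s1'' m1''" "seq_steps C1 s2' m2' os2 c2' s2'' m2''"
  have "prefix (os @ os1) (os @ os2) \<or> prefix (os @ os2) (os @ os1)"
    using a seq_steps.step[OF b(1) c(1)] seq_steps.step[OF b(2) c(2)] by blast
  then show "prefix os1 os2 \<or> prefix os2 os1" by simp
qed

lemma Rel_step:
  assumes R: "Rel P PA C s1 m1 f1 s2 m2 f2"
    and st1: "spec_step C s1 m1 f1 ds os1 C1 s1' m1' f1'"
    and st2: "spec_step C s2 m2 f2 ds os2 C2 s2' m2' f2'"
  shows "os1 = os2 \<and> C1 = C2 \<and> Rel P PA C1 s1' m1' f1' s2' m2' f2'"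
proof -
  from R have ok: "ok P PA C" and ff: "f1 = f2" and bb: "s1 bvar = s2 bvar" and pe: "pub_equiv P s1 s2"
    and ae: "apub_equiv PA m1 m2" and l1: "\<forall>a. 0 < length (m1 a)" and l2: "\<forall>a. 0 < length (m2 a)"
    and ph: "(\<not> f1 \<and> s1 bvar = 0 \<and> seq_obs_eqv C s1 m1 C s2 m2 \<and> Inv0 C s1 m1 \<and> Inv0 C s2 m2) \<or>
      s1 bvar = 1 \<or> (pendB C s1 \<and> pendB C s2)"
    unfolding Rel_def by blast+
  have wf: "wf P PA C" using ok ok_wf by blast
  have st2': "spec_step C s2 m2 f1 ds os2 C2 s2' m2' f2'" using st2 ff by simp
  have ok1: "ok P PA C1" using ok_step[OF ok st1] .
  have len1: "\<forall>a. 0 < length (m1' a)" using spec_len[OF st1] l1 by simp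
  have len2: "\<forall>a. 0 < length (m2' a)" using spec_len[OF st2] l2 by simp
  have lo: "length os1 = length os2" using spec_len[OF st1] spec_len[OF st2] by simp
  from ph show ?thesis
  proof (elim disjE)
    assume p1: "\<not> f1 \<and> s1 bvar = 0 \<and> seq_obs_eqv C s1 m1 C s2 m2 \<and> Inv0 C s1 m1 \<and> Inv0 C s2 m2"
    show ?thesis
    proof (cases "ds = [DForce]")
      case True
      from force_seq[OF st1 True] obtain D1 where d1: "seq_step C s1 m1 os1 D1 s1 m1" "s1' = s1" "m1' = m1" "f1'" by blast
      from force_seq[OF st2 True] obtain D2 where d2: "seq_step C s2 m2 os2 D2 s2 m2" "s2' = s2" "m2' = m2" "f2'" by blast
      have "prefix os1 os2 \<or> prefix os2 os1"
        using p1 one_step_steps[OF d1(1)] one_step_steps[OF d2(1)] unfolding seq_obs_eqv_def by blast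
      then have oe: "os1 = os2" using lo prefix_same_len by blast
      have ce: "C1 = C2" using det_cmd[OF st1] st2' oe by blast
      have pd1: "pendB C1 s1'" using force_pend[OF ok st1 True] .
      have pd2: "pendB C1 s2'" using force_pend[OF ok st2 True] ce by simp
      show ?thesis unfolding Rel_def using oe ce ok1 d1 d2 bb pe ae len1 len2 pd1 pd2 by simp
    next
      case False
      have q1: "seq_step C s1 m1 os1 C1 s1' m1' \<and> \<not> f1'" using spec_to_seq[OF st1] p1 False by simp
      have q2: "seq_step C s2 m2 os2 C2 s2' m2' \<and> \<not> f2'" using spec_to_seq[OF st2] p1 ff False by simp
      have "prefix os1 os2 \<or> prefix os2 os1"
        using p1 q1 q2 one_step_steps unfolding seq_obs_eqv_def by blast
      then have oe: "os1 = os2" using lo prefix_same_len by blast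
      have ce: "C1 = C2" using det_cmd[OF st1] st2' oe by blast
      have ni: "(\<forall>x. x \<noteq> bvar \<longrightarrow> P x \<longrightarrow> s1' x = s2' x) \<and> apub_equiv PA m1' m2'"
        using NI[OF st1 st2' wf pe bb ae l1 l2] oe p1 by blast
      have i1: "Inv0 C1 s1' m1' \<and> s1' bvar = 0" using Inv0_step p1 q1 by blast
      have i2: "Inv0 C1 s2' m2' \<and> s2' bvar = 0" using Inv0_step p1 q2 ce by blast
      have se: "seq_obs_eqv C1 s1' m1' C1 s2' m2'" using seq_eqv_step p1 q1 q2 ce oe by blast
      have pe': "pub_equiv P s1' s2'" unfolding pub_equiv_def using ni i1 i2 by metis
      show ?thesis unfolding Rel_def using oe ce ok1 q1 q2 i1 i2 se pe' ni len1 len2 by simp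
    qed
  next
    assume b1: "s1 bvar = 1"
    have ni: "os1 = os2 \<and> f1' = f2' \<and> (\<forall>x. x \<noteq> bvar \<longrightarrow> P x \<longrightarrow> s1' x = s2' x) \<and> apub_equiv PA m1' m2' \<and>
       (s1 bvar = 1 \<longrightarrow> s1' bvar = 1 \<and> s2' bvar = 1)"
      using NI[OF st1 st2' wf pe bb ae l1 l2] b1 by blast
    have ce: "C1 = C2" using det_cmd[OF st1] st2' ni by blast
    have pe': "pub_equiv P s1' s2'" unfolding pub_equiv_def using ni b1 by metis
    show ?thesis unfolding Rel_def using ni ce ok1 pe' len1 len2 b1 by simp
  next
    assume pd: "pendB C s1 \<and> pendB C s2"
    have a1: "ds = [] \<and> os1 = [] \<and> m1' = m1 \<and> f1' = f1 \<and> (if hdA C then s1' = s1(bvar := 1) else s1' = s1 \<and> pendB C1 s1)"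
      using pend_step[OF st1] pd by blast
    have a2: "ds = [] \<and> os2 = [] \<and> m2' = m2 \<and> f2' = f2 \<and> (if hdA C then s2' = s2(bvar := 1) else s2' = s2 \<and> pendB C2 s2)"
      using pend_step[OF st2] pd by blast
    have ce: "C1 = C2" using det_cmd[OF st1] st2' a1 a2 by blast
    show ?thesis
    proof (cases "hdA C")
      case True
      then have "s1' = s1(bvar := 1)" "s2' = s2(bvar := 1)" using a1 a2 by auto
      then have "pub_equiv P s1' s2'" "s1' bvar = 1" "s2' bvar = 1" using pe by (auto simp: pub_equiv_def)
      then show ?thesis unfolding Rel_def using a1 a2 ce ok1 ff ae len1 len2 by simp
    next
      case False
      then have "s1' = s1" "s2' = s2" "pendB C1 s1" "pendB C1 s2" using a1 a2 ce by auto
      then show ?thesis unfolding Rel_def using a1 a2 ce ok1 ff ae len1 len2 bb pe by simp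
    qed
  qed
qed

lemma main:
  assumes "spec_steps C s1 m1 f1 ds os1 C1' s1' m1' f1'" "Rel P PA C s1 m1 f1 s2 m2 f2"
    "spec_steps C s2 m2 f2 ds os2 C2' s2' m2' f2'"
  shows "os1 = os2"
  using assms
proof (induction arbitrary: s2 m2 f2 os2 C2' s2' m2' f2' rule: spec_steps.induct)
  case (refl c s m f)
  then show ?case using spec_steps_len by fastforce
next
  case (step c s m f dsa osa c' s' m' f' dsb osb c'' s'' m'' f'')
  from step.prems(2) have
    "(dsa @ dsb = [] \<and> os2 = []) \<or> (\<exists>ds1 os1' c2 s2a m2a f2a ds2 os2'. dsa @ dsb = ds1 @ ds2 \<and> os2 = os1' @ os2' \<and>
       spec_step c s2 m2 f2 ds1 os1' c2 s2a m2a f2a \<and> spec_steps c2 s2a m2a f2a ds2 os2' C2' s2' m2' f2')"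
    by (cases rule: spec_steps.cases) auto
  then show ?case
  proof (elim disjE exE conjE)
    assume "dsa @ dsb = []" "os2 = []"
    then show ?thesis using spec_len[OF step.hyps(1)] spec_steps_len[OF step.hyps(2)] by auto
  next
    fix ds1 os1' c2 s2a m2a f2a ds2 os2'
    assume e1: "dsa @ dsb = ds1 @ ds2" and e2: "os2 = os1' @ os2'"
      and st2: "spec_step c s2 m2 f2 ds1 os1' c2 s2a m2a f2a" and sts2: "spec_steps c2 s2a m2a f2a ds2 os2' C2' s2' m2' f2'"
    have L1: "length dsa \<le> 1" "dsa = [] \<longleftrightarrow> \<not> needsD c" using spec_len[OF step.hyps(1)] by auto
    have L2: "length ds1 \<le> 1" "ds1 = [] \<longleftrightarrow> \<not> needsD c" using spec_len[OF st2] by auto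
    have deq: "dsa = ds1 \<and> dsb = ds2"
    proof (cases "needsD c")
      case False
      then show ?thesis using L1 L2 e1 by simp
    next
      case True
      then obtain d1 d2 where "dsa = [d1]" "ds1 = [d2]" using L1 L2
        by (metis One_nat_def le_Suc_eq le_zero_eq length_0_conv length_Suc_conv)
      then show ?thesis using e1 by simp
    qed
    have s2': "spec_step c s2 m2 f2 dsa os1' c2 s2a m2a f2a" using st2 deq by simp
    from Rel_step[OF step.prems(1) step.hyps(1) s2'] have
      r: "osa = os1' \<and> c' = c2 \<and> Rel P PA c' s' m' f' s2a m2a f2a" by blast
    have "spec_steps c' s2a m2a f2a dsb os2' C2' s2' m2' f2'" using sts2 r deq by simp
    then have "osb = os2'" using step.IH r by blast
    then show ?thesis using r e2 by simp
  qed
qed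


theorem theorem3p3:
  fixes P :: "vname \<Rightarrow> bool" and PA :: "aname \<Rightarrow> bool" and c :: com
    and s1 s2 :: sstate and m1 m2 :: astate
  assumes "bvar \<notin> used_vars c" and "s1 bvar = 0" and "s2 bvar = 0"
    and "\<forall>a. length (m1 a) > 0" and "\<forall>a. length (m2 a) > 0"
    and "well_typed P PA True c" and "pub_equiv P s1 s2" and "apub_equiv PA m1 m2"
    and "seq_obs_eqv c s1 m1 c s2 m2"
  shows "spec_obs_eqv (fislh P c) s1 m1 False (fislh P c) s2 m2 False"
proof -
  have r: "Rel P PA (fislh P c) s1 m1 False s2 m2 False"
    unfolding Rel_def using wt_ok[OF assms(6) assms(1)] init_seq[OF assms(1,2,3,9), where P=P] assms by simp
  show ?thesis unfolding spec_obs_eqv_def using main[OF _ r] by blast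
qed

end
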